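(* Let $dY+\Omega Y=0$ be a rank $2$ linear differential system with \[\Omega=\left(\frac{A_{-m}}{x^m}+\cdots+\frac{A_{-1}}{x}+A(x)\right)dx,\] where $A_{-m},\dots,A_{-1}\in\operatorname{Mat}(2,\mathbb{C})$, $A_{-m}\ne0$, $A\in\operatorname{Mat}(2,\mathbb{C}\{x\})$, and the pole order $m$ at $x=0$ is minimal (cannot be decreased by a meromorphic gauge transformation). Suppose $m\geq 2$, $A_{-m}$ is not semi-simple, and $A_{-m}$ is trace-free. Then the formal data of the system are generic in the sense of Inaba: the diagonal entries $\lambda^{\pm}\in\mathbb{C}[z^{-1}]$ of its Hukuhara–Turrittin ramified formal normal form $\mathrm{diag}(\lambda^+,\lambda^-)dz$ (in the variable $z$ with $x=z^2$) have nonzero coefficient of $z^{-(2m-2)}$.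
   Context: In the irregular ramified case ($m\ge2$ minimal, $A_{-m}$ not semi-simple), the system is formally holomorphically gauge equivalent to $\begin{pmatrix}\alpha&\beta\\ x\beta&\alpha-\frac{1}{2x}\end{pmatrix}dx$ with $\alpha,\beta$ Laurent polynomials in $x$; after the ramification $x=z^2$ and a further gauge transformation this becomes the Hukuhara–Turrittin ramified formal normal form $\mathrm{diag}(\lambda^+,\lambda^-)dz$ with $\lambda^\pm=2(\pm x\beta+z\alpha)$, determined up to permutation. *)

theory Defs
  imports "HOL-Analysis.Analysis" "HOL-Computational_Algebra.Formal_Laurent_Series"
begin

text \<open>A Laurent series is convergent (an element of C{x}[1/x]) iff after removing
  the power of x it is a power series with positive radius of convergence.\<close>
definition conv_fls :: "complex fls \<Rightarrow> bool" where
  "conv_fls f \<longleftrightarrow> fps_conv_radius (fls_base_factor_to_fps f) > 0"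

definition mero_mat :: "complex fls ^ 2 ^ 2 \<Rightarrow> bool" where
  "mero_mat M \<longleftrightarrow> (\<forall>i j. conv_fls (M $ i $ j))"

definition mat_deriv :: "complex fls ^ 2 ^ 2 \<Rightarrow> complex fls ^ 2 ^ 2" where
  "mat_deriv G = (\<chi> i j. fls_deriv (G $ i $ j))"

text \<open>The gauge transformation Y = G Y' turns dY + Omega Y = 0 into dY' + Omega' Y' = 0 with
  Omega' = G^-1 Omega G + G^-1 dG, i.e. G Omega' = Omega G + dG (connection matrices are
  coefficients of dx, resp. dz).\<close>
definition gauge_by :: "complex fls ^ 2 ^ 2 \<Rightarrow> complex fls ^ 2 ^ 2 \<Rightarrow> complex fls ^ 2 ^ 2 \<Rightarrow> bool" where
  "gauge_by G \<Omega> \<Omega>' \<longleftrightarrow> invertible G \<and> mat_deriv G + \<Omega> ** G = G ** \<Omega>'"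

definition pole_order_ge :: "complex fls ^ 2 ^ 2 \<Rightarrow> nat \<Rightarrow> bool" where
  "pole_order_ge \<Omega> m \<longleftrightarrow> (\<exists>i j. \<Omega> $ i $ j \<noteq> 0 \<and> fls_subdegree (\<Omega> $ i $ j) \<le> - int m)"

definition pole_order_le :: "complex fls ^ 2 ^ 2 \<Rightarrow> nat \<Rightarrow> bool" where
  "pole_order_le \<Omega> m \<longleftrightarrow> (\<forall>i j. \<forall>n < - int m. fls_nth (\<Omega> $ i $ j) n = 0)"

definition coeff_mat :: "complex fls ^ 2 ^ 2 \<Rightarrow> int \<Rightarrow> complex ^ 2 ^ 2" where
  "coeff_mat \<Omega> k = (\<chi> i j. fls_nth (\<Omega> $ i $ j) k)"

definition minimal_pole_order :: "complex fls ^ 2 ^ 2 \<Rightarrow> nat \<Rightarrow> bool" where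
  "minimal_pole_order \<Omega> m \<longleftrightarrow>
     (\<forall>G \<Omega>'. mero_mat G \<and> gauge_by G \<Omega> \<Omega>' \<longrightarrow> pole_order_ge \<Omega>' m)"

definition semisimple :: "complex ^ 2 ^ 2 \<Rightarrow> bool" where
  "semisimple A \<longleftrightarrow> (\<exists>(P::complex^2^2) (D::complex^2^2). invertible P \<and> (\<forall>i j. i \<noteq> j \<longrightarrow> D $ i $ j = 0) \<and> A ** P = P ** D)"

text \<open>Pull-back of Omega(x) dx under x = z^2: Omega(z^2) 2z dz.\<close>
definition ramify2 :: "complex fls ^ 2 ^ 2 \<Rightarrow> complex fls ^ 2 ^ 2" where
  "ramify2 \<Omega> = (\<chi> i j. fls_compose_power (\<Omega> $ i $ j) 2 * (2 * fls_X))"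

definition diag2 :: "complex fls \<Rightarrow> complex fls \<Rightarrow> complex fls ^ 2 ^ 2" where
  "diag2 a b = (\<chi> i j. if i = j then (if i = 1 then a else b) else 0)"

definition poly_zinv :: "complex fls \<Rightarrow> bool" where
  "poly_zinv l \<longleftrightarrow> (\<forall>n > 0. fls_nth l n = 0)"

definition ramified_normal_form :: "complex fls ^ 2 ^ 2 \<Rightarrow> complex fls \<Rightarrow> complex fls \<Rightarrow> bool" where
  "ramified_normal_form \<Omega> lp lm \<longleftrightarrow> poly_zinv lp \<and> poly_zinv lm \<and>
     (\<exists>G. gauge_by G (ramify2 \<Omega>) (diag2 lp lm))"

end

theory Submission
  imports Defs
begin


no_notation fps_nth (infixl "$" 75)

lemma two_ne: "(1::2) \<noteq> 2" "(2::2) \<noteq> 1" by (simp_all add: eq_commute)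
lemmas m2 = vec_eq_iff forall_2 matrix_matrix_mult_def sum_2 mat_def

lemma mat_deriv_mult: "mat_deriv (A ** B) = mat_deriv A ** B + A ** mat_deriv B"
  by (simp add: m2 mat_deriv_def algebra_simps)

lemma mat_deriv_one: "mat_deriv (mat 1) = 0"
  by (simp add: mat_deriv_def mat_def vec_eq_iff)

lemma matrix_add_rdistrib': "((A::'a::semiring_1^'n^'m) + B) ** C = A ** C + B ** C"
  by (vector matrix_matrix_mult_def sum.distrib[symmetric] field_simps)

lemma gauge_compose:
  assumes "gauge_by G1 A B" "gauge_by G2 B C"
  shows "gauge_by (G1 ** G2) A C"
proof -
  have i: "invertible (G1 ** G2)" using assms invertible_mult unfolding gauge_by_def by blast
  have e1: "mat_deriv G1 + A ** G1 = G1 ** B" and e2: "mat_deriv G2 + B ** G2 = G2 ** C"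
    using assms unfolding gauge_by_def by auto
  have "mat_deriv (G1 ** G2) + A ** (G1 ** G2) = (mat_deriv G1 + A ** G1) ** G2 + G1 ** mat_deriv G2"
    by (simp add: mat_deriv_mult matrix_add_rdistrib' matrix_mul_assoc algebra_simps)
  also have "\<dots> = G1 ** (B ** G2 + mat_deriv G2)"
    by (simp add: e1 matrix_add_ldistrib matrix_mul_assoc)
  also have "\<dots> = G1 ** G2 ** C" by (simp add: e2 add.commute matrix_mul_assoc)
  finally show ?thesis using i unfolding gauge_by_def by simp
qed

lemma gauge_inverse:
  assumes "gauge_by G A B"
  obtains H where "gauge_by H B A"
proof -
  obtain Gi where g1: "G ** Gi = mat 1" and g2: "Gi ** G = mat 1"
    using assms unfolding gauge_by_def invertible_def by blast
  have e: "mat_deriv G + A ** G = G ** B" using assms unfolding gauge_by_def by auto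
  have d: "mat_deriv Gi ** G + Gi ** mat_deriv G = 0"
    using arg_cong[OF g2, of mat_deriv] by (simp add: mat_deriv_mult mat_deriv_one)
  have d2: "Gi ** mat_deriv G ** Gi = - mat_deriv Gi"
  proof -
    have "Gi ** mat_deriv G ** Gi = (mat_deriv Gi ** G + Gi ** mat_deriv G) ** Gi - mat_deriv Gi ** (G ** Gi)"
      by (simp add: matrix_add_rdistrib' matrix_mul_assoc)
    also have "\<dots> = - mat_deriv Gi" by (simp add: d g1)
    finally show ?thesis .
  qed
  have "Gi ** (mat_deriv G + A ** G) ** Gi = Gi ** (G ** B) ** Gi" by (simp add: e)
  hence "Gi ** mat_deriv G ** Gi + Gi ** A = B ** Gi"
    by (simp add: matrix_add_ldistrib matrix_add_rdistrib' matrix_mul_assoc g1 g2)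
      (simp add: matrix_mul_assoc[symmetric] g1)
  hence "mat_deriv Gi + B ** Gi = Gi ** A" using d2 by (simp add: algebra_simps)
  moreover have "invertible Gi" using g1 g2 unfolding invertible_def by blast
  ultimately show ?thesis using that unfolding gauge_by_def by blast
qed

definition cm :: "complex^2^2 \<Rightarrow> complex fls^2^2" where
  "cm P = (\<chi> i j. fls_const (P $ i $ j))"

lemma cm_nth[simp]: "cm P $ i $ j = fls_const (P $ i $ j)" by (simp add: cm_def)

lemma mat_deriv_cm[simp]: "mat_deriv (cm P) = 0"
  by (simp add: mat_deriv_def vec_eq_iff)

lemma cm_mult: "cm (P ** Q) = cm P ** cm Q"
  by (simp add: m2 fls_plus_const)

lemma cm_one: "cm (mat 1) = mat 1"
  by (simp add: m2)

lemma coeff_mat_conj: "coeff_mat (cm P ** F ** cm Q) n = P ** coeff_mat F n ** Q"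
  by (simp add: m2 coeff_mat_def algebra_simps)

lemma gauge_const:
  assumes "P ** Pv = mat 1" "Pv ** P = mat 1"
  shows "gauge_by (cm P) A (cm Pv ** A ** cm P)"
proof -
  have "cm P ** (cm Pv ** A ** cm P) = (cm P ** cm Pv) ** A ** cm P" by (simp add: matrix_mul_assoc)
  also have "\<dots> = A ** cm P" by (simp add: cm_mult[symmetric] assms cm_one)
  finally have "mat_deriv (cm P) + A ** cm P = cm P ** (cm Pv ** A ** cm P)" by simp
  moreover have "invertible (cm P)" unfolding invertible_def
    by (rule exI[of _ "cm Pv"]) (simp add: cm_mult[symmetric] assms cm_one)
  ultimately show ?thesis unfolding gauge_by_def by simp
qed



definition mk2 :: "'a::zero \<Rightarrow> 'a \<Rightarrow> 'a \<Rightarrow> 'a \<Rightarrow> 'a^2^2" where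
  "mk2 a b c d = (\<chi> i j. if i = 1 then (if j = 1 then a else b) else (if j = 1 then c else d))"

lemma mk2_nth[simp]: "mk2 a b c d $ 1 $ 1 = a" "mk2 a b c d $ 1 $ 2 = b"
  "mk2 a b c d $ 2 $ 1 = c" "mk2 a b c d $ 2 $ 2 = d"
  by (simp_all add: mk2_def two_ne)

lemma mk2_eq: "(M = mk2 a b c d) \<longleftrightarrow> M$1$1 = a \<and> M$1$2 = b \<and> M$2$1 = c \<and> M$2$2 = d"
  by (auto simp: vec_eq_iff forall_2)

definition nilN :: "complex^2^2" where "nilN = mk2 0 1 0 0"

lemma jordan_nil:
  fixes A :: "complex^2^2"
  assumes "A \<noteq> 0" "trace A = 0" "\<not> semisimple A"
  shows "\<exists>P Pv. P ** Pv = mat 1 \<and> Pv ** P = mat 1 \<and> Pv ** A ** P = nilN"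
proof -
  define a b c where "a = A$1$1" and "b = A$1$2" and "c = A$2$1"
  have d: "A$2$2 = -a" using assms(2) by (simp add: trace_def sum_2 a_def eq_neg_iff_add_eq_0 add.commute)
  have A: "A = mk2 a b c (-a)" by (simp add: mk2_eq a_def b_def c_def d)
  show ?thesis
  proof (cases "a^2 + b*c = 0")
    case False
    define s where "s = csqrt (a^2 + b*c)"
    have s2: "s^2 = a^2+b*c" by (simp add: s_def)
    have s0: "s \<noteq> 0" using False s2 by auto
    have "semisimple A"
    proof (cases "b = 0")
      case False
      define P where "P = mk2 b b (s-a) (-s-a)"
      define D where "D = mk2 s 0 0 (-s)"
      define Pv where "Pv = mk2 ((-s-a)/(-2*b * s)) (-b/(-2*b * s)) (-(s-a)/(-2*b * s)) (b/(-2*b * s))"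
      have "P ** Pv = mat 1" using False s0
        by (simp add: P_def Pv_def m2 two_ne field_simps; simp add: algebra_simps)
      moreover have "Pv ** P = mat 1" using False s0
        by (simp add: P_def Pv_def m2 two_ne field_simps; simp add: algebra_simps)
      moreover have "A ** P = P ** D" using s2
        by (simp add: A P_def D_def m2 two_ne algebra_simps power2_eq_square)
      moreover have "\<forall>i j. i \<noteq> j \<longrightarrow> D $ i $ j = 0" by (simp add: D_def forall_2 two_ne)
      ultimately show ?thesis unfolding semisimple_def invertible_def by blast
    next
      case True
      with False have a0: "a \<noteq> 0" by simp
      define P where "P = mk2 (2*a) 0 c 1"
      define D where "D = mk2 a 0 0 (-a)"
      define Pv where "Pv = mk2 (1/(2*a)) 0 (-c/(2*a)) 1"
      have "P ** Pv = mat 1" using a0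
        by (simp add: P_def Pv_def m2 two_ne field_simps)
      moreover have "Pv ** P = mat 1" using a0
        by (simp add: P_def Pv_def m2 two_ne field_simps)
      moreover have "A ** P = P ** D" using True
        by (simp add: A P_def D_def m2 two_ne algebra_simps power2_eq_square)
      moreover have "\<forall>i j. i \<noteq> j \<longrightarrow> D $ i $ j = 0" by (simp add: D_def forall_2 two_ne)
      ultimately show ?thesis unfolding semisimple_def invertible_def by blast
    qed
    with assms(3) show ?thesis by simp
  next
    case True
    show ?thesis
    proof (cases "b = 0")
      case False
      define P where "P = mk2 b 0 (-a) 1"
      define Pv where "Pv = mk2 (1/b) 0 (a/b) 1"
      have "P ** Pv = mat 1" using False
        by (simp add: P_def Pv_def m2 two_ne field_simps)
      moreover have "Pv ** P = mat 1" using False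
        by (simp add: P_def Pv_def m2 two_ne field_simps)
      moreover have "Pv ** A ** P = nilN" using False True
        by (simp add: A P_def Pv_def nilN_def m2 two_ne field_simps power2_eq_square; simp add: algebra_simps)
      ultimately show ?thesis by blast
    next
      case b0: True
      with True have a0: "a = 0" by simp
      with b0 assms(1) A have c0: "c \<noteq> 0" by (auto simp: mk2_def vec_eq_iff)
      define P where "P = mk2 0 1 c 0"
      define Pv where "Pv = mk2 0 (1/c) 1 0"
      have "P ** Pv = mat 1" using c0
        by (simp add: P_def Pv_def m2 two_ne field_simps)
      moreover have "Pv ** P = mat 1" using c0
        by (simp add: P_def Pv_def m2 two_ne field_simps)
      moreover have "Pv ** A ** P = nilN" using c0 a0 b0
        by (simp add: A P_def Pv_def nilN_def m2 two_ne field_simps)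
      ultimately show ?thesis by blast
    qed
  qed
qed



lemma X_Xinv[simp]: "fls_X * fls_X_inv = (1::complex fls)" "fls_X_inv * fls_X = (1::complex fls)"
  by (simp_all add: fls_X_times_conv_shift fls_X_inv_conv_shift_1)

lemma X_Xinv'[simp]: "fls_X * (fls_X_inv * f) = (f::complex fls)" "fls_X_inv * (fls_X * f) = f"
  by (simp_all add: mult.assoc[symmetric])

lemma conv_fls_fps: "fps_conv_radius f > 0 \<Longrightarrow> conv_fls (fps_to_fls f)"
  unfolding conv_fls_def fls_base_factor_to_fps_to_fls
  by simp

lemma conv_fls_const: "conv_fls (fls_const c)"
  using conv_fls_fps[of "fps_const c"] by simp

lemma conv_fls_const_X: "conv_fls (fls_const c * fls_X)"
proof -
  have "fps_conv_radius (fps_const c * fps_X) \<ge> min \<infinity> \<infinity>"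
    using fps_conv_radius_mult[of "fps_const c" fps_X] by simp
  hence "fps_conv_radius (fps_const c * fps_X) > 0" by simp
  from conv_fls_fps[OF this] show ?thesis by (simp add: fls_times_fps_to_fls)
qed

definition shear :: "complex fls^2^2 \<Rightarrow> complex fls^2^2" where
  "shear B = mk2 (B$1$1) (fls_X * B$1$2) (fls_X_inv * B$2$1) (B$2$2 + fls_X_inv)"

definition Sx :: "complex fls^2^2" where "Sx = mk2 1 0 0 fls_X"

lemma shear_gauge:
  assumes "P ** Pv = mat 1" "Pv ** P = mat 1"
  shows "gauge_by (cm P ** Sx) \<Omega> (shear (cm Pv ** \<Omega> ** cm P))"
proof -
  define B where "B = cm Pv ** \<Omega> ** cm P"
  have PP: "cm P ** cm Pv = mat 1" "cm Pv ** cm P = mat 1"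
    by (simp_all add: cm_mult[symmetric] assms cm_one)
  have dS: "mat_deriv Sx = mk2 0 0 0 1" by (simp add: Sx_def mat_deriv_def mk2_eq)
  have key: "Sx ** shear B = B ** Sx + mk2 0 0 0 1"
    by (simp add: Sx_def shear_def m2 two_ne ac_simps distrib_left)
  have "cm P ** Sx ** shear B = cm P ** (B ** Sx) + cm P ** mk2 0 0 0 1"
    by (simp add: matrix_mul_assoc[symmetric] key matrix_add_ldistrib)
  also have "cm P ** (B ** Sx) = \<Omega> ** (cm P ** Sx)"
    by (simp add: B_def matrix_mul_assoc PP)
  also have "cm P ** mk2 0 0 0 1 = mat_deriv (cm P ** Sx)"
    by (simp add: mat_deriv_mult dS)
  finally have e: "mat_deriv (cm P ** Sx) + \<Omega> ** (cm P ** Sx) = cm P ** Sx ** shear B"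
    by (simp add: add.commute)
  have "(cm P ** Sx) ** (mk2 1 0 0 fls_X_inv ** cm Pv) = mat 1"
  proof -
    have "Sx ** mk2 1 0 0 fls_X_inv = mat 1" by (simp add: Sx_def m2 two_ne)
    hence "(cm P ** Sx) ** (mk2 1 0 0 fls_X_inv ** cm Pv) = cm P ** mat 1 ** cm Pv"
      by (metis matrix_mul_assoc)
    thus ?thesis by (simp add: PP)
  qed
  hence "invertible (cm P ** Sx)" by (subst invertible_right_inverse) blast
  with e show ?thesis unfolding gauge_by_def B_def by simp
qed

lemma mero_shear: "mero_mat (cm P ** Sx)"
  unfolding mero_mat_def by (simp add: Sx_def forall_2 matrix_matrix_mult_def sum_2 conv_fls_const conv_fls_const_X)



lemma no_low_coeffs:
  assumes "\<forall>n. n \<le> - int m \<longrightarrow> fls_nth f n = 0"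
  shows "\<not> (f \<noteq> 0 \<and> fls_subdegree f \<le> - int m)"
  using assms nth_fls_subdegree_nonzero by blast

lemma Xmult_nth[simp]: "fls_nth (fls_X * (f::complex fls)) n = fls_nth f (n - 1)"
  by (simp add: fls_X_times_conv_shift)

lemma Xinvmult_nth[simp]: "fls_nth (fls_X_inv * (f::complex fls)) n = fls_nth f (n + 1)"
  by (simp add: fls_X_inv_times_conv_shift)

lemma coeff_B: "fls_nth ((cm Pv ** \<Omega> ** cm P) $ i $ j) n = (Pv ** coeff_mat \<Omega> n ** P) $ i $ j"
  by (simp only: coeff_mat_conj[symmetric]) (simp add: coeff_mat_def)

lemma minimal_c:
  assumes "pole_order_le \<Omega> m" "minimal_pole_order \<Omega> m" "m \<ge> 2"
    "P ** Pv = mat 1" "Pv ** P = mat 1" "Pv ** coeff_mat \<Omega> (- int m) ** P = nilN"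
  shows "(Pv ** coeff_mat \<Omega> (1 - int m) ** P) $ 2 $ 1 \<noteq> 0"
proof
  assume c0: "(Pv ** coeff_mat \<Omega> (1 - int m) ** P) $ 2 $ 1 = 0"
  define B where "B = cm Pv ** \<Omega> ** cm P"
  have low: "Pv ** coeff_mat \<Omega> n ** P = 0" if "n < - int m" for n
  proof -
    have "coeff_mat \<Omega> n = 0" using assms(1) that
      by (simp add: pole_order_le_def coeff_mat_def vec_eq_iff)
    thus ?thesis by simp
  qed
  have Bn: "fls_nth (B $ i $ j) n = (Pv ** coeff_mat \<Omega> n ** P) $ i $ j" for i j n
    unfolding B_def by (rule coeff_B)
  have cases: "n < - int m \<or> n = - int m" if "n \<le> - int m" for n using that by auto
  have "\<not> pole_order_ge (shear B) m"
    unfolding pole_order_ge_def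
  proof (intro notI, elim exE)
    fix i j assume h: "shear B $ i $ j \<noteq> 0 \<and> fls_subdegree (shear B $ i $ j) \<le> - int m"
    have "\<forall>n. n \<le> - int m \<longrightarrow> fls_nth (shear B $ i $ j) n = 0"
    proof (intro allI impI)
      fix n :: int assume n: "n \<le> - int m"
      have l11: "fls_nth (B $ 1 $ 1) n = 0" "fls_nth (B $ 2 $ 2) n = 0" "fls_nth (B $ 2 $ 1) n = 0"
        using cases[OF n] low[of n] assms(6) by (auto simp: Bn nilN_def)
      have l12: "fls_nth (B $ 1 $ 2) (n - 1) = 0" using low[of "n-1"] n by (simp add: Bn)
      have l21: "fls_nth (B $ 2 $ 1) (n + 1) = 0"
      proof -
        have "n + 1 < - int m \<or> n + 1 = - int m \<or> n + 1 = 1 - int m" using n by auto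
        thus ?thesis using low[of "n+1"] assms(6) c0 by (auto simp: Bn nilN_def)
      qed
      have "n \<noteq> -1" using n assms(3) by auto
      then show "fls_nth (shear B $ i $ j) n = 0"
        using exhaust_2[of i] exhaust_2[of j] l11 l12 l21
        by (auto simp: shear_def)
    qed
    with no_low_coeffs h show False by blast
  qed
  moreover have "gauge_by (cm P ** Sx) \<Omega> (shear B)"
    unfolding B_def by (rule shear_gauge[OF assms(4,5)])
  ultimately show False using assms(2) mero_shear unfolding minimal_pole_order_def by blast
qed



definition muv :: "complex \<Rightarrow> complex \<Rightarrow> 2 \<Rightarrow> complex" where
  "muv m1 m2 i = (if i = 1 then m1 else m2)"

definition stepT :: "nat \<Rightarrow> (nat \<Rightarrow> complex^2^2) \<Rightarrow> nat \<Rightarrow> (nat \<Rightarrow> complex^2^2) \<Rightarrow> (nat \<Rightarrow> complex^2^2) \<Rightarrow> complex^2^2" where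
  "stepT k mc n g l = mc n + (\<Sum>i\<in>{1..<n}. mc i ** g (n - i) - g (n - i) ** l i)
      + (if k \<le> n then (\<chi> a b. of_nat (n + 1 - k) * g (n + 1 - k) $ a $ b) else 0)"

definition stepf :: "nat \<Rightarrow> complex \<Rightarrow> complex \<Rightarrow> (nat \<Rightarrow> complex^2^2) \<Rightarrow> nat \<Rightarrow> (nat \<Rightarrow> complex^2^2) \<Rightarrow> (nat \<Rightarrow> complex^2^2) \<Rightarrow> (complex^2^2) \<times> (complex^2^2)" where
  "stepf k m1 m2 mc n g l = (if n = 0 then (mat 1, mk2 m1 0 0 m2) else
     (let T = stepT k mc n g l in
      ((\<chi> a b. if a = b then 0 else T $ a $ b / (muv m1 m2 b - muv m1 m2 a)),
       (\<chi> a b. if a = b then T $ a $ b else 0))))"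

primrec pre :: "nat \<Rightarrow> complex \<Rightarrow> complex \<Rightarrow> (nat \<Rightarrow> complex^2^2) \<Rightarrow> nat \<Rightarrow> ((complex^2^2) \<times> (complex^2^2)) list" where
  "pre k m1 m2 mc 0 = []"
| "pre k m1 m2 mc (Suc n) = pre k m1 m2 mc n @
     [stepf k m1 m2 mc n (\<lambda>j. fst (pre k m1 m2 mc n ! j)) (\<lambda>j. snd (pre k m1 m2 mc n ! j))]"

lemma length_pre[simp]: "length (pre k m1 m2 mc n) = n"
  by (induction n) auto

lemma pre_nth: "j < n \<Longrightarrow> pre k m1 m2 mc n ! j = pre k m1 m2 mc (Suc j) ! j"
proof (induction n)
  case (Suc n)
  thus ?case by (cases "j < n") (auto simp: nth_append less_Suc_eq)
qed simp

definition gs where "gs k m1 m2 mc j = fst (pre k m1 m2 mc (Suc j) ! j)"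
definition ls where "ls k m1 m2 mc j = snd (pre k m1 m2 mc (Suc j) ! j)"

lemma stepT_cong:
  assumes "k \<ge> 2" "\<And>j. j < n \<Longrightarrow> g j = g' j \<and> l j = l' j"
  shows "stepT k mc n g l = stepT k mc n g' l'"
proof -
  have "(\<Sum>i\<in>{1..<n}. mc i ** g (n - i) - g (n - i) ** l i) = (\<Sum>i\<in>{1..<n}. mc i ** g' (n - i) - g' (n - i) ** l' i)"
    by (rule sum.cong) (use assms(2) in auto)
  moreover have "k \<le> n \<Longrightarrow> g (n + 1 - k) = g' (n + 1 - k)" using assms by auto
  ultimately show ?thesis unfolding stepT_def by simp
qed

lemma gs_ls_step:
  assumes "k \<ge> 2"
  shows "(gs k m1 m2 mc n, ls k m1 m2 mc n) = stepf k m1 m2 mc n (gs k m1 m2 mc) (ls k m1 m2 mc)"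
proof -
  have "(gs k m1 m2 mc n, ls k m1 m2 mc n) = stepf k m1 m2 mc n (\<lambda>j. fst (pre k m1 m2 mc n ! j)) (\<lambda>j. snd (pre k m1 m2 mc n ! j))"
    by (simp add: gs_def ls_def nth_append)
  also have "\<dots> = stepf k m1 m2 mc n (gs k m1 m2 mc) (ls k m1 m2 mc)"
    unfolding stepf_def using stepT_cong[OF assms, of n "\<lambda>j. fst (pre k m1 m2 mc n ! j)" "gs k m1 m2 mc" "\<lambda>j. snd (pre k m1 m2 mc n ! j)" "ls k m1 m2 mc" mc]
    by (simp add: gs_def ls_def pre_nth)
  finally show ?thesis .
qed

lemma sum_split3:
  assumes "(n::nat) > 0"
  shows "(\<Sum>i\<le>n. f i) = f 0 + (\<Sum>i\<in>{1..<n}. f i) + (f n :: 'a::comm_monoid_add)"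
proof -
  have "{..n} = insert 0 (insert n {1..<n})" using assms by auto
  thus ?thesis using assms by (simp add: ac_simps)
qed

lemma coeff_eq:
  assumes "k \<ge> 2" "m1 \<noteq> m2" "mc 0 = mk2 m1 0 0 m2"
  defines "g \<equiv> gs k m1 m2 mc" and "l \<equiv> ls k m1 m2 mc"
  shows "(\<Sum>i\<le>n. mc i ** g (n - i))
          + (if k \<le> n then (\<chi> a b. of_nat (n + 1 - k) * g (n + 1 - k) $ a $ b) else 0)
         = (\<Sum>i\<le>n. g (n - i) ** l i)"
proof (cases "n = 0")
  case True
  have "g 0 = mat 1" "l 0 = mk2 m1 0 0 m2" using gs_ls_step[OF assms(1), of m1 m2 mc 0]
    by (simp_all add: g_def l_def stepf_def)
  thus ?thesis using True assms(1,3) by simp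
next
  case False
  have g0: "g 0 = mat 1" "l 0 = mk2 m1 0 0 m2" using gs_ls_step[OF assms(1), of m1 m2 mc 0]
    by (simp_all add: g_def l_def stepf_def)
  define T where "T = stepT k mc n g l"
  have st: "(g n, l n) = stepf k m1 m2 mc n g l" unfolding g_def l_def by (rule gs_ls_step[OF assms(1)])
  have gn: "g n = (\<chi> a b. if a = b then 0 else T $ a $ b / (muv m1 m2 b - muv m1 m2 a))"
   and ln: "l n = (\<chi> a b. if a = b then T $ a $ b else 0)"
    using st False unfolding stepf_def T_def[symmetric] Let_def by simp_all
  define S1 where "S1 = (\<Sum>i\<in>{1..<n}. mc i ** g (n - i))"
  define S2 where "S2 = (\<Sum>i\<in>{1..<n}. g (n - i) ** l i)"
  define Dk where "Dk = (if k \<le> n then (\<chi> a b. of_nat (n + 1 - k) * g (n + 1 - k) $ a $ b) else (0::complex^2^2))"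
  have T: "T = mc n + (S1 - S2) + Dk"
    unfolding T_def stepT_def S1_def S2_def Dk_def by (simp add: sum_subtractf)
  have L: "(\<Sum>i\<le>n. mc i ** g (n - i)) = mc 0 ** g n + S1 + mc n"
    using sum_split3[OF _, of n "\<lambda>i. mc i ** g (n - i)"] False g0 by (simp add: S1_def)
  have R: "(\<Sum>i\<le>n. g (n - i) ** l i) = g n ** mc 0 + S2 + l n"
    using sum_split3[OF _, of n "\<lambda>i. g (n - i) ** l i"] False g0 assms(3) by (simp add: S2_def)
  have m12: "m1 - m2 \<noteq> 0" "m2 - m1 \<noteq> 0" using assms(2) by auto
  have "mc 0 ** g n + S1 + mc n + Dk = g n ** mc 0 + S2 + l n"
  proof -
    have S2eq: "S2 = mc n + S1 + Dk - T" using T by (simp add: algebra_simps)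
    show ?thesis unfolding assms(3) gn ln S2eq
      using m12 by (simp add: m2 two_ne muv_def field_simps)
  qed
  thus ?thesis using L R by (simp add: Dk_def)
qed



definition fm :: "(nat \<Rightarrow> complex^2^2) \<Rightarrow> complex fps^2^2" where
  "fm C = (\<chi> a b. Abs_fps (\<lambda>n. C n $ a $ b))"

lemma fm_nth[simp]: "fps_nth (fm C $ a $ b) n = C n $ a $ b"
  by (simp add: fm_def)

lemma fm_mult_nth: "fps_nth ((fm C ** fm D) $ a $ b) n = (\<Sum>i\<le>n. C i ** D (n - i)) $ a $ b"
proof -
  have "fps_nth ((fm C ** fm D) $ a $ b) n = (\<Sum>c\<in>UNIV. \<Sum>i=0..n. C i $ a $ c * D (n - i) $ c $ b)"
    by (simp add: matrix_matrix_mult_def fps_sum_nth fps_mult_nth)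
  also have "\<dots> = (\<Sum>i=0..n. \<Sum>c\<in>UNIV. C i $ a $ c * D (n - i) $ c $ b)"
    by (rule sum.swap)
  also have "\<dots> = (\<Sum>i\<le>n. C i ** D (n - i)) $ a $ b"
    by (simp add: matrix_matrix_mult_def atLeast0AtMost)
  finally show ?thesis .
qed

lemma fps_identity:
  assumes "k \<ge> 2" "m1 \<noteq> m2" "mc 0 = mk2 m1 0 0 m2"
  defines "g \<equiv> gs k m1 m2 mc" and "l \<equiv> ls k m1 m2 mc"
  shows "fps_X ^ k * fps_deriv (fm g $ a $ b) + (fm mc ** fm g) $ a $ b = (fm g ** fm l) $ a $ b"
proof (rule fps_ext)
  fix n
  have ce: "(\<Sum>i\<le>n. mc i ** g (n - i))
          + (if k \<le> n then (\<chi> a b. of_nat (n + 1 - k) * g (n + 1 - k) $ a $ b) else 0)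
         = (\<Sum>i\<le>n. g (n - i) ** l i)"
    unfolding g_def l_def using coeff_eq[of k m1 m2 mc n] assms(1-3) by blast
  have "(\<Sum>i\<le>n. g (n - i) ** l i) = (\<Sum>i\<le>n. g i ** l (n - i))"
    by (rule sum.reindex_bij_witness[where i="\<lambda>i. n - i" and j="\<lambda>i. n - i"]) auto
  with ce have ce': "(\<Sum>i\<le>n. mc i ** g (n - i))
          + (if k \<le> n then (\<chi> a b. of_nat (n + 1 - k) * g (n + 1 - k) $ a $ b) else 0)
         = (\<Sum>i\<le>n. g i ** l (n - i))" by simp
  have d: "fps_nth (fps_X ^ k * fps_deriv (fm g $ a $ b)) n = (if k \<le> n then of_nat (n + 1 - k) * g (n + 1 - k) $ a $ b else 0)"
    by (auto simp: fps_X_power_mult_nth Suc_diff_le)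
  show "fps_nth (fps_X ^ k * fps_deriv (fm g $ a $ b) + (fm mc ** fm g) $ a $ b) n = fps_nth ((fm g ** fm l) $ a $ b) n"
    using arg_cong[OF ce', of "\<lambda>X. X $ a $ b"]
    by (simp add: d fm_mult_nth add.commute split: if_splits)
qed

lemma inv2:
  fixes A :: "'a::field^2^2"
  assumes "A$1$1 * A$2$2 - A$1$2 * A$2$1 \<noteq> 0"
  shows "invertible A"
proof -
  define d where "d = A$1$1 * A$2$2 - A$1$2 * A$2$1"
  have d0: "d \<noteq> 0" using assms d_def by simp
  have "A ** mk2 (A$2$2 / d) (- A$1$2 / d) (- A$2$1 / d) (A$1$1 / d) = mat 1"
    using d0 by (simp add: m2 two_ne field_simps; simp add: d_def algebra_simps)
  thus ?thesis by (subst invertible_right_inverse) blast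
qed



lemma shift1_mult[simp]: "fls_shift n 1 * (f::complex fls) = fls_shift n f"
  using fls_X_intpow_times_conv_shift(1)[of "-n" f] by simp

lemma fls_rep:
  assumes "\<forall>n. n < - int k \<longrightarrow> fls_nth (f::complex fls) n = 0"
  shows "f = fls_X_intpow (- int k) * fps_to_fls (Abs_fps (\<lambda>n. fls_nth f (int n - int k)))"
proof (rule fls_eqI)
  fix n
  show "fls_nth f n = fls_nth (fls_X_intpow (- int k) * fps_to_fls (Abs_fps (\<lambda>n. fls_nth f (int n - int k)))) n"
    apply (simp only: shift1_mult minus_minus)
    using assms by (auto simp: not_less)
qed

lemma xk_cancel: "fls_X_intpow (- int k) * (fls_X ^ k * f) = (f :: complex fls)"
  by (simp add: fls_X_intpow_times_conv_shift fls_X_power_times_conv_shift)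

lemma diag2_mk2: "diag2 a b = mk2 a 0 0 b"
  by (simp add: diag2_def mk2_eq two_ne)

lemma gauge_Gf:
  fixes M :: "complex fls^2^2"
  assumes k: "k \<ge> 2" and m12: "m1 \<noteq> m2"
    and low: "\<forall>i j n. n < - int k \<longrightarrow> fls_nth (M $ i $ j) n = 0"
    and lead: "coeff_mat M (- int k) = mk2 m1 0 0 m2"
  defines "mc \<equiv> (\<lambda>n::nat. coeff_mat M (int n - int k))"
  defines "Gf \<equiv> (\<chi> a b. fps_to_fls (fm (gs k m1 m2 mc) $ a $ b))"
  defines "Lf \<equiv> (\<chi> a b. fls_X_intpow (- int k) * fps_to_fls (fm (ls k m1 m2 mc) $ a $ b))"
  shows "gauge_by Gf M Lf"
proof -
  define g where "g = gs k m1 m2 mc"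
  define l where "l = ls k m1 m2 mc"
  define xk :: "complex fls" where "xk = fls_X_intpow (- int k)"
  have xkX: "xk * (fls_X ^ k * f) = f" for f unfolding xk_def by (rule xk_cancel)
  have Lf': "Lf = (\<chi> a b. xk * fps_to_fls (fm l $ a $ b))" unfolding Lf_def xk_def l_def ..
  have mc0: "mc 0 = mk2 m1 0 0 m2" using lead by (simp add: mc_def)
  have Mrep: "M $ a $ b = xk * fps_to_fls (fm mc $ a $ b)" for a b
  proof -
    have "fm mc $ a $ b = Abs_fps (\<lambda>n. fls_nth (M $ a $ b) (int n - int k))"
      by (simp add: fm_def mc_def coeff_mat_def)
    thus ?thesis using fls_rep[of k "M $ a $ b"] low unfolding xk_def by simp
  qed
  let ?F = "fps_to_fls"
  have eq: "mat_deriv Gf + M ** Gf = Gf ** Lf"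
  proof -
    have "(mat_deriv Gf + M ** Gf) $ a $ b = (Gf ** Lf) $ a $ b" for a b
    proof -
      have fi: "fps_X ^ k * fps_deriv (fm g $ a $ b) + (fm mc ** fm g) $ a $ b = (fm g ** fm l) $ a $ b"
        unfolding g_def l_def by (rule fps_identity[of k m1 m2 mc, OF k m12 mc0])
      have "?F (fps_X ^ k * fps_deriv (fm g $ a $ b) + (fm mc ** fm g) $ a $ b) = ?F ((fm g ** fm l) $ a $ b)"
        using fi by simp
      hence "fls_X ^ k * fls_deriv (?F (fm g $ a $ b)) + ?F (fm mc $ a $ 1) * ?F (fm g $ 1 $ b) + ?F (fm mc $ a $ 2) * ?F (fm g $ 2 $ b)
          = ?F (fm g $ a $ 1) * ?F (fm l $ 1 $ b) + ?F (fm g $ a $ 2) * ?F (fm l $ 2 $ b)"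
        by (simp add: matrix_matrix_mult_def sum_2 fls_times_fps_to_fls fps_to_fls_power fls_deriv_fps_to_fls add.assoc)
      hence H: "xk * (fls_X ^ k * fls_deriv (?F (fm g $ a $ b)) + ?F (fm mc $ a $ 1) * ?F (fm g $ 1 $ b) + ?F (fm mc $ a $ 2) * ?F (fm g $ 2 $ b))
          = xk * (?F (fm g $ a $ 1) * ?F (fm l $ 1 $ b) + ?F (fm g $ a $ 2) * ?F (fm l $ 2 $ b))"
        by simp
      have "fls_deriv (?F (fm g $ a $ b)) + xk * ?F (fm mc $ a $ 1) * ?F (fm g $ 1 $ b) + xk * ?F (fm mc $ a $ 2) * ?F (fm g $ 2 $ b)
          = xk * (fls_X ^ k * fls_deriv (?F (fm g $ a $ b)) + ?F (fm mc $ a $ 1) * ?F (fm g $ 1 $ b) + ?F (fm mc $ a $ 2) * ?F (fm g $ 2 $ b))"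
        by (simp add: distrib_left xkX mult.assoc)
      also have "\<dots> = xk * (?F (fm g $ a $ 1) * ?F (fm l $ 1 $ b) + ?F (fm g $ a $ 2) * ?F (fm l $ 2 $ b))"
        by (rule H)
      also have "\<dots> = ?F (fm g $ a $ 1) * (xk * ?F (fm l $ 1 $ b)) + ?F (fm g $ a $ 2) * (xk * ?F (fm l $ 2 $ b))"
        by (simp add: distrib_left ac_simps)
      finally have "fls_deriv (?F (fm g $ a $ b)) + xk * ?F (fm mc $ a $ 1) * ?F (fm g $ 1 $ b) + xk * ?F (fm mc $ a $ 2) * ?F (fm g $ 2 $ b)
          = ?F (fm g $ a $ 1) * (xk * ?F (fm l $ 1 $ b)) + ?F (fm g $ a $ 2) * (xk * ?F (fm l $ 2 $ b))" .
      thus ?thesis unfolding Lf'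
        by (simp add: Gf_def Mrep mat_deriv_def matrix_matrix_mult_def sum_2 g_def add.assoc)
    qed
    thus ?thesis by (simp add: vec_eq_iff)
  qed
  have inv: "invertible Gf"
  proof (rule inv2)
    define dh where "dh = fm g $ 1 $ 1 * fm g $ 2 $ 2 - fm g $ 1 $ 2 * fm g $ 2 $ 1"
    have g0: "g 0 = mat 1" using gs_ls_step[OF k, of m1 m2 mc 0] by (simp add: g_def stepf_def)
    have "fps_nth dh 0 = 1" by (simp add: dh_def g0 mat_def two_ne)
    hence "dh \<noteq> 0" by auto
    hence "?F dh \<noteq> 0" by simp
    thus "Gf $ 1 $ 1 * Gf $ 2 $ 2 - Gf $ 1 $ 2 * Gf $ 2 $ 1 \<noteq> 0"
      by (simp add: Gf_def dh_def g_def fls_times_fps_to_fls)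
  qed
  show ?thesis using eq inv unfolding gauge_by_def by simp
qed



lemma exp_part:
  fixes lam :: "complex fps" and k :: nat
  defines "p \<equiv> Abs_fps (\<lambda>n. if n = 0 then 0 else fps_nth lam (n + k))"
  defines "e \<equiv> fps_exp 1 oo fps_integral (- p) 0"
  defines "d \<equiv> fls_X_intpow (- int k) * fps_to_fls lam - fps_to_fls p"
  shows "fls_deriv (fps_to_fls e) + (fls_X_intpow (- int k) * fps_to_fls lam) * fps_to_fls e = fps_to_fls e * d"
    and "fps_to_fls e \<noteq> 0" and "poly_zinv d" and "fls_nth d (- int k) = fps_nth lam 0"
proof -
  have q0: "fps_nth (fps_integral (- p) 0) 0 = 0" by simp
  have "fps_deriv e = (fps_deriv (fps_exp 1) oo fps_integral (- p) 0) * fps_deriv (fps_integral (- p) 0)"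
    unfolding e_def by (rule fps_compose_deriv[OF q0])
  also have "\<dots> = e * (- p)" by (simp add: e_def fps_deriv_fps_integral)
  finally have de: "fps_deriv e = - (e * p)" by simp
  show "fls_deriv (fps_to_fls e) + (fls_X_intpow (- int k) * fps_to_fls lam) * fps_to_fls e = fps_to_fls e * d"
    by (simp add: fls_deriv_fps_to_fls de fls_times_fps_to_fls d_def algebra_simps del: shift1_mult)
  have "fps_nth e 0 = 1" by (simp add: e_def)
  hence "e \<noteq> 0" by auto
  thus "fps_to_fls e \<noteq> 0" by simp
  show "poly_zinv d" unfolding poly_zinv_def
  proof (intro allI impI)
    fix n :: int assume n: "n > 0"
    have "nat (n + int k) = nat n + k" using n by simp
    thus "fls_nth d n = 0" using n by (simp add: d_def p_def)
  qed
  show "fls_nth d (- int k) = fps_nth lam 0"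
    by (simp add: d_def p_def)
qed



lemma exp_part_ex:
  "\<exists>e d. fls_deriv (fps_to_fls e) + (fls_X_intpow (- int k) * fps_to_fls lam) * fps_to_fls e = fps_to_fls e * d
     \<and> fps_to_fls e \<noteq> 0 \<and> poly_zinv d \<and> fls_nth d (- int k) = fps_nth lam 0"
  using exp_part[where lam=lam and k=k] by blast

lemma core:
  fixes M :: "complex fls^2^2"
  assumes k: "k \<ge> 2" and m12: "m1 \<noteq> m2"
    and low: "\<forall>i j n. n < - int k \<longrightarrow> fls_nth (M $ i $ j) n = 0"
    and lead: "coeff_mat M (- int k) = mk2 m1 0 0 m2"
  shows "\<exists>G lp lm. gauge_by G M (diag2 lp lm) \<and> poly_zinv lp \<and> poly_zinv lm
           \<and> fls_nth lp (- int k) = m1 \<and> fls_nth lm (- int k) = m2"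
proof -
  define mc where "mc = (\<lambda>n::nat. coeff_mat M (int n - int k))"
  define l where "l = ls k m1 m2 mc"
  define Gf where "Gf = (\<chi> a b. fps_to_fls (fm (gs k m1 m2 mc) $ a $ b))"
  define Lf where "Lf = (\<chi> a b. fls_X_intpow (- int k) * fps_to_fls (fm l $ a $ b))"
  have g1: "gauge_by Gf M Lf" unfolding Gf_def Lf_def l_def mc_def by (rule gauge_Gf[OF k m12 low lead])
  have loff: "l n $ 1 $ 2 = 0 \<and> l n $ 2 $ 1 = 0" for n
    using gs_ls_step[OF k, of m1 m2 mc n] by (cases "n = 0") (auto simp: l_def stepf_def Let_def two_ne)
  have l0: "l 0 $ 1 $ 1 = m1" "l 0 $ 2 $ 2 = m2"
    using gs_ls_step[OF k, of m1 m2 mc 0] by (auto simp: l_def stepf_def)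
  have off: "fm l $ 1 $ 2 = 0" "fm l $ 2 $ 1 = 0" by (auto intro!: fps_ext simp: loff)
  define lam1 where "lam1 = fm l $ 1 $ 1"
  define lam2 where "lam2 = fm l $ 2 $ 2"
  define xk :: "complex fls" where "xk = fls_X_intpow (- int k)"
  have Lf: "Lf = mk2 (xk * fps_to_fls lam1) 0 0 (xk * fps_to_fls lam2)"
    by (simp add: Lf_def mk2_eq off lam1_def lam2_def xk_def)
  obtain e1 d1 where e1: "fls_deriv (fps_to_fls e1) + (xk * fps_to_fls lam1) * fps_to_fls e1 = fps_to_fls e1 * d1"
      "fps_to_fls e1 \<noteq> 0" "poly_zinv d1" "fls_nth d1 (- int k) = fps_nth lam1 0"
    using exp_part_ex[of k lam1] unfolding xk_def by blast
  obtain e2 d2 where e2: "fls_deriv (fps_to_fls e2) + (xk * fps_to_fls lam2) * fps_to_fls e2 = fps_to_fls e2 * d2"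
      "fps_to_fls e2 \<noteq> 0" "poly_zinv d2" "fls_nth d2 (- int k) = fps_nth lam2 0"
    using exp_part_ex[of k lam2] unfolding xk_def by blast
  define E where "E = mk2 (fps_to_fls e1) 0 0 (fps_to_fls e2)"
  have "mat_deriv E + Lf ** E = E ** diag2 d1 d2"
    using e1(1) e2(1) by (simp add: E_def Lf diag2_mk2 m2 two_ne mat_deriv_def mk2_def)
  moreover have "invertible E" by (rule inv2) (use e1(2) e2(2) in \<open>simp add: E_def\<close>)
  ultimately have g2: "gauge_by E Lf (diag2 d1 d2)" unfolding gauge_by_def by simp
  have "gauge_by (Gf ** E) M (diag2 d1 d2)" by (rule gauge_compose[OF g1 g2])
  moreover have "fls_nth d1 (- int k) = m1" "fls_nth d2 (- int k) = m2"
    using e1(4) e2(4) l0 by (simp_all add: lam1_def lam2_def)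
  ultimately show ?thesis using e1(3) e2(3) by blast
qed



lemma deriv_ratio_low:
  fixes h d :: "complex fls"
  assumes h0: "h \<noteq> 0" and eq: "fls_deriv h = h * d" and n: "n < -1"
  shows "fls_nth d n = 0"
proof (rule ccontr)
  assume dn: "fls_nth d n \<noteq> 0"
  hence d0: "d \<noteq> 0" by auto
  have t: "fls_subdegree d \<le> n" using dn by (rule fls_subdegree_leI)
  define s where "s = fls_subdegree h"
  define t' where "t' = fls_subdegree d"
  have hd0: "h * d \<noteq> 0" using h0 d0 by simp
  have "fls_subdegree (h * d) = s + t'" using h0 d0 by (simp add: s_def t'_def)
  hence "fls_nth (h * d) (s + t') \<noteq> 0" using nth_fls_subdegree_nonzero[OF hd0] by simp
  moreover have "fls_nth (fls_deriv h) (s + t') = 0"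
  proof -
    have "s + t' + 1 < fls_subdegree h" using t n by (simp add: s_def t'_def)
    thus ?thesis by simp
  qed
  ultimately show False using eq by simp
qed

lemma uniq_col:
  assumes g: "gauge_by H (diag2 a1 a2) (diag2 b1 b2)" and n: "n < -1"
  shows "(fls_nth b1 n = fls_nth a1 n \<or> fls_nth b1 n = fls_nth a2 n) \<and>
         (fls_nth b2 n = fls_nth a1 n \<or> fls_nth b2 n = fls_nth a2 n)"
proof -
  obtain Hi where Hi: "Hi ** H = mat 1" using g unfolding gauge_by_def invertible_def by blast
  have e: "mat_deriv H + diag2 a1 a2 ** H = H ** diag2 b1 b2" using g unfolding gauge_by_def by simp
  have e11: "fls_deriv (H$1$1) = H$1$1 * (b1 - a1)" and e21: "fls_deriv (H$2$1) = H$2$1 * (b1 - a2)"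
   and e12: "fls_deriv (H$1$2) = H$1$2 * (b2 - a1)" and e22: "fls_deriv (H$2$2) = H$2$2 * (b2 - a2)"
    using e by (simp_all add: diag2_mk2 m2 two_ne mat_deriv_def algebra_simps eq_diff_eq)
  have c1: "H$1$1 \<noteq> 0 \<or> H$2$1 \<noteq> 0"
  proof (rule ccontr)
    assume "\<not> ?thesis"
    hence "(Hi ** H) $ 1 $ 1 = 0" by (simp add: matrix_matrix_mult_def sum_2)
    thus False using Hi by (simp add: mat_def)
  qed
  have c2: "H$1$2 \<noteq> 0 \<or> H$2$2 \<noteq> 0"
  proof (rule ccontr)
    assume "\<not> ?thesis"
    hence "(Hi ** H) $ 2 $ 2 = 0" by (simp add: matrix_matrix_mult_def sum_2)
    thus False using Hi by (simp add: mat_def)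
  qed
  show ?thesis
    using c1 c2 deriv_ratio_low[OF _ e11 n] deriv_ratio_low[OF _ e21 n]
      deriv_ratio_low[OF _ e12 n] deriv_ratio_low[OF _ e22 n] by auto
qed



lemma two_mult_nth: "fls_nth ((2::complex fls) * g) n = 2 * fls_nth g n"
  by (metis fls_const_numeral fls_mult_const_nth(1))

lemma ramify_nth:
  "fls_nth (ramify2 \<Omega> $ i $ j) (2 * q + 1) = 2 * fls_nth (\<Omega> $ i $ j) q"
  "fls_nth (ramify2 \<Omega> $ i $ j) (2 * q) = 0"
proof -
  have r: "ramify2 \<Omega> $ i $ j = 2 * (fls_X * fls_compose_power (\<Omega> $ i $ j) 2)"
    by (simp add: ramify2_def ac_simps)
  show "fls_nth (ramify2 \<Omega> $ i $ j) (2 * q + 1) = 2 * fls_nth (\<Omega> $ i $ j) q"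
    unfolding r two_mult_nth by (simp add: fls_nth_compose_power)
  have "\<not> (2::int) dvd 2 * q - 1" by presburger
  thus "fls_nth (ramify2 \<Omega> $ i $ j) (2 * q) = 0"
    unfolding r two_mult_nth by (simp add: fls_nth_compose_power)
qed

lemma conj_scale:
  fixes Pv X P :: "complex^2^2"
  shows "(Pv ** (\<chi> i j. 2 * X $ i $ j) ** P) $ a $ b = 2 * (Pv ** X ** P) $ a $ b"
  by (simp add: matrix_matrix_mult_def sum_2 algebra_simps)

lemma Bz_nth:
  fixes \<Omega> :: "complex fls^2^2"
  shows "fls_nth ((cm Pv ** ramify2 \<Omega> ** cm P) $ a $ b) (2 * q + 1) = 2 * (Pv ** coeff_mat \<Omega> q ** P) $ a $ b"
    and "fls_nth ((cm Pv ** ramify2 \<Omega> ** cm P) $ a $ b) (2 * q) = 0"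
proof -
  have "coeff_mat (ramify2 \<Omega>) (2 * q + 1) = (\<chi> i j. 2 * coeff_mat \<Omega> q $ i $ j)"
    by (simp add: coeff_mat_def ramify_nth vec_eq_iff)
  thus "fls_nth ((cm Pv ** ramify2 \<Omega> ** cm P) $ a $ b) (2 * q + 1) = 2 * (Pv ** coeff_mat \<Omega> q ** P) $ a $ b"
    by (simp add: coeff_B conj_scale)
  have "coeff_mat (ramify2 \<Omega>) (2 * q) = 0"
    by (simp add: coeff_mat_def ramify_nth vec_eq_iff)
  thus "fls_nth ((cm Pv ** ramify2 \<Omega> ** cm P) $ a $ b) (2 * q) = 0"
    by (simp add: coeff_B)
qed

lemma int_parity: obtains q where "n = 2 * q" | q where "n = 2 * q + (1::int)"
  by (metis odd_two_times_div_two_succ even_two_times_div_two)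

lemma Z_coeffs:
  fixes \<Omega> :: "complex fls^2^2"
  assumes m: "m \<ge> 2"
    and low: "\<And>q. q < - int m \<Longrightarrow> Pv ** coeff_mat \<Omega> q ** P = 0"
    and lead: "Pv ** coeff_mat \<Omega> (- int m) ** P = nilN"
  defines "Z \<equiv> shear (cm Pv ** ramify2 \<Omega> ** cm P)"
  shows "\<forall>i j n. n < - int (2 * m - 2) \<longrightarrow> fls_nth (Z $ i $ j) n = 0"
    and "coeff_mat Z (- int (2 * m - 2)) = mk2 0 2 (2 * (Pv ** coeff_mat \<Omega> (1 - int m) ** P) $ 2 $ 1) 0"
proof -
  define Bz where "Bz = cm Pv ** ramify2 \<Omega> ** cm P"
  define C where "C = (\<lambda>q. Pv ** coeff_mat \<Omega> q ** P)"
  have Bo: "fls_nth (Bz $ a $ b) (2 * q + 1) = 2 * C q $ a $ b" for a b q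
    unfolding Bz_def C_def by (rule Bz_nth(1))
  have Be: "fls_nth (Bz $ a $ b) (2 * q) = 0" for a b q
    unfolding Bz_def by (rule Bz_nth(2))
  have Clow: "C q $ a $ b = 0" if "q < - int m" for a b q using low[OF that] by (simp add: C_def)
  have Clead: "C (- int m) = mk2 0 1 0 0" using lead by (simp add: C_def nilN_def)
  have Cle: "C q $ 1 $ 1 = 0" "C q $ 2 $ 2 = 0" "C q $ 2 $ 1 = 0" if "q \<le> - int m" for q
    using that Clow Clead by (cases "q = - int m"; simp)+
  have km: "int (2 * m - 2) = 2 * int m - 2" using m by simp
  have Z: "Z $ 1 $ 1 = Bz $ 1 $ 1" "Z $ 1 $ 2 = fls_X * Bz $ 1 $ 2"
      "Z $ 2 $ 1 = fls_X_inv * Bz $ 2 $ 1" "Z $ 2 $ 2 = Bz $ 2 $ 2 + fls_X_inv"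
    by (simp_all add: Z_def Bz_def shear_def)
  have diag_low: "fls_nth (Bz $ a $ a) n = 0" if "n \<le> 1 - 2 * int m" "a = 1 \<or> a = 2" for n a
  proof (cases n rule: int_parity)
    case (1 q) thus ?thesis by (simp add: Be)
  next
    case (2 q)
    hence "q \<le> - int m" using that by simp
    thus ?thesis using that(2) 2 by (auto simp: Bo Cle)
  qed
  show "\<forall>i j n. n < - int (2 * m - 2) \<longrightarrow> fls_nth (Z $ i $ j) n = 0"
  proof (intro allI impI)
    fix i j :: 2 and n :: int assume n: "n < - int (2 * m - 2)"
    have n': "n \<le> 1 - 2 * int m" using n km by simp
    have z11: "fls_nth (Z $ 1 $ 1) n = 0" using diag_low[OF n'] by (simp add: Z)
    have z22: "fls_nth (Z $ 2 $ 2) n = 0" using diag_low[OF n'] n' m by (simp add: Z)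
    have z12: "fls_nth (Z $ 1 $ 2) n = 0"
    proof (cases "n - 1" rule: int_parity)
      case (1 q) thus ?thesis by (simp add: Z Be)
    next
      case (2 q)
      hence "q < - int m" using n' by simp
      thus ?thesis by (simp only: Z Xmult_nth 2 Bo) (simp add: Clow)
    qed
    have z21: "fls_nth (Z $ 2 $ 1) n = 0"
    proof (cases "n + 1" rule: int_parity)
      case (1 q) thus ?thesis by (simp add: Z Be)
    next
      case (2 q)
      hence "q \<le> - int m" using n' by simp
      thus ?thesis by (simp only: Z Xinvmult_nth 2 Bo) (simp add: Cle)
    qed
    show "fls_nth (Z $ i $ j) n = 0"
      using z11 z12 z21 z22 exhaust_2[of i] exhaust_2[of j] by auto
  qed
  have nn: "- int (2 * m - 2) = 2 * (1 - int m)" using km by simp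
  have bb: "fls_nth (Bz $ a $ b) (2 - 2 * int m) = 0" for a b
    using Be[of a b "1 - int m"] by (simp add: algebra_simps)
  have z11: "fls_nth (Z $ 1 $ 1) (- int (2 * m - 2)) = 0" unfolding nn by (simp add: Z bb)
  have z22: "fls_nth (Z $ 2 $ 2) (- int (2 * m - 2)) = 0" unfolding nn using m by (simp add: Z bb)
  have z12: "fls_nth (Z $ 1 $ 2) (- int (2 * m - 2)) = 2"
  proof -
    have e: "2 * (1 - int m) - 1 = 2 * (- int m) + 1" by simp
    show ?thesis unfolding nn by (simp only: Z Xmult_nth e Bo) (simp add: Clead)
  qed
  have z21: "fls_nth (Z $ 2 $ 1) (- int (2 * m - 2)) = 2 * C (1 - int m) $ 2 $ 1"
  proof -
    show ?thesis unfolding nn by (simp only: Z Xinvmult_nth Bo)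
  qed
  show "coeff_mat Z (- int (2 * m - 2)) = mk2 0 2 (2 * (Pv ** coeff_mat \<Omega> (1 - int m) ** P) $ 2 $ 1) 0"
    using z11 z12 z21 z22 by (simp add: mk2_eq coeff_mat_def C_def)
qed



theorem mainTheorem7:
  fixes \<Omega> :: "complex fls ^ 2 ^ 2" and m :: nat
  assumes "mero_mat \<Omega>"
    and "pole_order_le \<Omega> m"
    and "coeff_mat \<Omega> (- int m) \<noteq> 0"
    and "minimal_pole_order \<Omega> m"
    and "m \<ge> 2"
    and "\<not> semisimple (coeff_mat \<Omega> (- int m))"
    and "trace (coeff_mat \<Omega> (- int m)) = 0"
  shows "(\<exists>lp lm. ramified_normal_form \<Omega> lp lm) \<and>
         (\<forall>lp lm. ramified_normal_form \<Omega> lp lm \<longrightarrow>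
            fls_nth lp (- (2 * int m - 2)) \<noteq> 0 \<and> fls_nth lm (- (2 * int m - 2)) \<noteq> 0)"
proof -
  obtain P Pv where PP: "P ** Pv = mat 1" "Pv ** P = mat 1" and lead: "Pv ** coeff_mat \<Omega> (- int m) ** P = nilN"
    using jordan_nil[OF assms(3) assms(7) assms(6)] by blast
  have low: "Pv ** coeff_mat \<Omega> q ** P = 0" if "q < - int m" for q
  proof -
    have "coeff_mat \<Omega> q = 0" using assms(2) that
      by (simp add: pole_order_le_def coeff_mat_def vec_eq_iff)
    thus ?thesis by simp
  qed
  define c where "c = (Pv ** coeff_mat \<Omega> (1 - int m) ** P) $ 2 $ 1"
  have c0: "c \<noteq> 0" unfolding c_def by (rule minimal_c[OF assms(2) assms(4) assms(5) PP lead])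
  define k where "k = 2 * m - 2"
  have k2: "k \<ge> 2" using assms(5) by (simp add: k_def)
  have kk: "- int k = - (2 * int m - 2)" using assms(5) by (simp add: k_def)
  define R where "R = ramify2 \<Omega>"
  define Z where "Z = shear (cm Pv ** ramify2 \<Omega> ** cm P)"
  have gZ: "gauge_by (cm P ** Sx) R Z" unfolding Z_def R_def by (rule shear_gauge[OF PP])
  have Zlow: "\<forall>i j n. n < - int k \<longrightarrow> fls_nth (Z $ i $ j) n = 0"
    and Zlead: "coeff_mat Z (- int k) = mk2 0 2 (2 * c) 0"
    using Z_coeffs[OF assms(5) low lead] unfolding Z_def k_def c_def by blast+
  define r where "r = csqrt c"
  have rr: "r * r = c" unfolding r_def using power2_csqrt[of c] by (simp add: power2_eq_square)
  have r0: "r \<noteq> 0" using rr c0 by auto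
  define Q where "Q = mk2 1 1 r (-r)"
  define Qv where "Qv = mk2 (1/2) (1/(2*r)) (1/2) (-1/(2*r))"
  have QQ: "Q ** Qv = mat 1" "Qv ** Q = mat 1" using r0
    by (simp_all add: Q_def Qv_def m2 two_ne field_simps)
  define Mq where "Mq = cm Qv ** Z ** cm Q"
  have gQ: "gauge_by (cm Q) Z Mq" unfolding Mq_def by (rule gauge_const[OF QQ])
  have Mlow: "\<forall>i j n. n < - int k \<longrightarrow> fls_nth (Mq $ i $ j) n = 0"
  proof (intro allI impI)
    fix i j n assume n: "n < - int k"
    have "coeff_mat Z n = 0" using Zlow n by (simp add: coeff_mat_def vec_eq_iff)
    thus "fls_nth (Mq $ i $ j) n = 0" unfolding Mq_def by (simp add: coeff_B)
  qed
  have Mlead: "coeff_mat Mq (- int k) = mk2 (2 * r) 0 0 (- (2 * r))"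
    unfolding Mq_def coeff_mat_conj Zlead using r0 rr[symmetric]
    by (simp add: Q_def Qv_def m2 two_ne mk2_eq field_simps)
  have r2: "2 * r \<noteq> - (2 * r)" using r0 by simp
  obtain G3 lp lm where g3: "gauge_by G3 Mq (diag2 lp lm)" and pz: "poly_zinv lp" "poly_zinv lm"
      and lv: "fls_nth lp (- int k) = 2 * r" "fls_nth lm (- int k) = - (2 * r)"
    using core[OF k2 r2 Mlow Mlead] by blast
  have g0: "gauge_by (cm P ** Sx ** cm Q ** G3) R (diag2 lp lm)"
    by (rule gauge_compose[OF gauge_compose[OF gZ gQ] g3])
  have ex: "ramified_normal_form \<Omega> lp lm"
    unfolding ramified_normal_form_def using pz g0 R_def by blast
  obtain H0 where h0: "gauge_by H0 (diag2 lp lm) R" using gauge_inverse[OF g0] by blast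
  have "fls_nth lp' (- (2 * int m - 2)) \<noteq> 0 \<and> fls_nth lm' (- (2 * int m - 2)) \<noteq> 0"
    if rnf: "ramified_normal_form \<Omega> lp' lm'" for lp' lm'
  proof -
    obtain G' where g': "gauge_by G' R (diag2 lp' lm')"
      using rnf unfolding ramified_normal_form_def R_def by blast
    have gh: "gauge_by (H0 ** G') (diag2 lp lm) (diag2 lp' lm')" by (rule gauge_compose[OF h0 g'])
    have n: "- int k < -1" using k2 by simp
    from uniq_col[OF gh n] lv r0 show ?thesis unfolding kk by auto
  qed
  with ex show ?thesis by blast
qed

end
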